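(* Let $(X,d)$ be a complete metric space, $N\in\mathbb{N}\setminus\{0\}$, $\alpha:(X\times X)\times(X\times X)\rightarrow[0,+\infty)$ an $N$--transitive mapping on $X\times X$, and $F:X\times X\rightarrow X$ such that for every $\varepsilon>0$ there exists $\delta(\varepsilon)>0$ for which, for all $(x,y),(u,v)\in X\times X$, \[ \varepsilon\leq\tfrac{d(x,u)+d(y,v)}{2}<\varepsilon+\delta(\varepsilon)\Rightarrow\alpha((x,y),(u,v))\,d(F(x,y),F(u,v))<\varepsilon. \] Suppose that: (B1) for all $(x,y),(u,v)\in X\times X$, $\alpha((x,y),(u,v))\geq1$ implies $\alpha((F(x,y),F(y,x)),(F(u,v),F(v,u)))\geq1$; (B2) there exists $(x_{0},y_{0})\in X\times X$ such that $\alpha((x_{0},y_{0}),(F(x_{0},y_{0}),F(y_{0},x_{0})))\geq1$ and $\alpha((F(y_{0},x_{0}),F(x_{0},y_{0})),(y_{0},x_{0}))\geq1$; (B3) $F$ is continuous. Then $F$ has a coupled fixed point, i.e., there exists $(x^{\ast},y^{\ast})\in X\times X$ with $x^{\ast}=F(x^{\ast},y^{\ast})$ and $y^{\ast}=F(y^{\ast},x^{\ast})$.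
   Context: $\mathbb{N}$ is the set of non-negative integers. For a set $Z$ and $\gamma:Z\times Z\rightarrow[0,+\infty)$, $\gamma$ is $N$--transitive (on $Z$) if for all $z_0,\dots,z_{N+1}\in Z$ with $\gamma(z_i,z_{i+1})\geq1$ for all $i\in\{0,\dots,N\}$ one has $\gamma(z_0,z_{N+1})\geq1$; here $Z=X\times X$. *)

theory Defs
  imports "HOL-Analysis.Analysis"
begin

definition N_transitive :: "nat \<Rightarrow> 'z set \<Rightarrow> ('z \<Rightarrow> 'z \<Rightarrow> real) \<Rightarrow> bool" where
  "N_transitive N Z \<gamma> \<longleftrightarrow>
     (\<forall>z :: nat \<Rightarrow> 'z. (\<forall>i\<le>N+1. z i \<in> Z) \<longrightarrow> (\<forall>i\<le>N. \<gamma> (z i) (z (Suc i)) \<ge> 1)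
        \<longrightarrow> \<gamma> (z 0) (z (N+1)) \<ge> 1)"

end

theory Submission
  imports Defs
begin

theorem corollary1:
  fixes F :: "'a::complete_space \<Rightarrow> 'a \<Rightarrow> 'a"
    and \<alpha> :: "('a \<times> 'a) \<Rightarrow> ('a \<times> 'a) \<Rightarrow> real"
    and N :: nat
  assumes N_pos: "N \<noteq> 0"
    and alpha_nonneg: "\<And>p q. \<alpha> p q \<ge> 0"
    and alpha_trans: "N_transitive N UNIV \<alpha>"
    and contraction: "\<forall>\<epsilon>>0. \<exists>\<delta>>0. \<forall>x y u v.
        \<epsilon> \<le> (dist x u + dist y v) / 2 \<and> (dist x u + dist y v) / 2 < \<epsilon> + \<delta>
        \<longrightarrow> \<alpha> (x, y) (u, v) * dist (F x y) (F u v) < \<epsilon>"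
    and B1: "\<And>x y u v. \<alpha> (x, y) (u, v) \<ge> 1 \<Longrightarrow> \<alpha> (F x y, F y x) (F u v, F v u) \<ge> 1"
    and B2: "\<exists>x0 y0. \<alpha> (x0, y0) (F x0 y0, F y0 x0) \<ge> 1 \<and> \<alpha> (F y0 x0, F x0 y0) (y0, x0) \<ge> 1"
    and B3: "continuous_on UNIV (\<lambda>p. F (fst p) (snd p))"
  shows "\<exists>xs ys. xs = F xs ys \<and> ys = F ys xs"
proof -
  define G where "G = (\<lambda>p::'a\<times>'a. (F (fst p) (snd p), F (snd p) (fst p)))"
  define \<rho> where "\<rho> = (\<lambda>p q::'a\<times>'a. (dist (fst p) (fst q) + dist (snd p) (snd q)) / 2)"
  define \<beta> where "\<beta> = (\<lambda>p q. \<alpha> p q \<ge> 1 \<and> \<alpha> (prod.swap q) (prod.swap p) \<ge> 1)"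
  have rho_tri: "\<rho> p r \<le> \<rho> p q + \<rho> q r" for p q r
  proof -
    have "dist (fst p) (fst r) + dist (snd p) (snd r) \<le>
      (dist (fst p) (fst q) + dist (snd p) (snd q)) + (dist (fst q) (fst r) + dist (snd q) (snd r))"
      using dist_triangle[of "fst p" "fst r" "fst q"] dist_triangle[of "snd p" "snd r" "snd q"] by linarith
    then have "(dist (fst p) (fst r) + dist (snd p) (snd r)) / 2 \<le>
      ((dist (fst p) (fst q) + dist (snd p) (snd q)) + (dist (fst q) (fst r) + dist (snd q) (snd r))) / 2"
      by (rule divide_right_mono) simp
    then show ?thesis unfolding \<rho>_def by (simp only: add_divide_distrib)
  qed
  have rho_nn: "\<rho> p q \<ge> 0" for p q unfolding \<rho>_def by simp
  have beta_G: "\<beta> (G p) (G q)" if "\<beta> p q" for p q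
  proof -
    obtain a b where p: "p = (a,b)" by (cases p)
    obtain c d where q: "q = (c,d)" by (cases q)
    show ?thesis using that B1[of a b c d] B1[of d c b a] unfolding \<beta>_def G_def p q by simp
  qed
  have key: "\<rho> (G p) (G q) < \<epsilon>" if "\<beta> p q" "\<epsilon> \<le> \<rho> p q" "\<rho> p q < \<epsilon> + \<delta>"
    "\<forall>x y u v. \<epsilon> \<le> (dist x u + dist y v) / 2 \<and> (dist x u + dist y v) / 2 < \<epsilon> + \<delta>
        \<longrightarrow> \<alpha> (x, y) (u, v) * dist (F x y) (F u v) < \<epsilon>" for p q \<epsilon> \<delta>
  proof -
    obtain a b where p: "p = (a,b)" by (cases p)
    obtain c d where q: "q = (c,d)" by (cases q)
    have h1: "\<alpha> (a,b) (c,d) * dist (F a b) (F c d) < \<epsilon>" using that(2,3,4) unfolding p q \<rho>_def by auto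
    have e: "(dist d b + dist c a) / 2 = \<rho> p q" unfolding p q \<rho>_def by (simp add: dist_commute)
    have h2: "\<alpha> (d,c) (b,a) * dist (F d c) (F b a) < \<epsilon>" using that(2,3) that(4)[THEN spec[of _ d], THEN spec[of _ c], THEN spec[of _ b], THEN spec[of _ a]] e by auto
    have a1: "\<alpha> (a,b) (c,d) \<ge> 1" "\<alpha> (d,c) (b,a) \<ge> 1" using that(1) unfolding \<beta>_def p q by auto
    have "dist (F a b) (F c d) \<le> \<alpha> (a,b) (c,d) * dist (F a b) (F c d)"
      using a1(1) mult_right_mono[of 1 _ "dist (F a b) (F c d)"] by simp
    moreover have "dist (F d c) (F b a) \<le> \<alpha> (d,c) (b,a) * dist (F d c) (F b a)"
      using a1(2) mult_right_mono[of 1 _ "dist (F d c) (F b a)"] by simp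
    ultimately show ?thesis using h1 h2 unfolding \<rho>_def G_def p q by (simp add: dist_commute)
  qed
  have mono: "\<rho> (G p) (G q) \<le> \<rho> p q" if "\<beta> p q" for p q
  proof (cases "\<rho> p q = 0")
    case True
    have "dist (fst p) (fst q) = 0" "dist (snd p) (snd q) = 0"
      using True zero_le_dist[of "fst p" "fst q"] zero_le_dist[of "snd p" "snd q"] unfolding \<rho>_def by (simp_all add: add_nonneg_eq_0_iff)
    then have "p = q" by (simp add: prod_eq_iff)
    then show ?thesis using rho_nn by (simp add: \<rho>_def)
  next
    case False
    then have "\<rho> p q > 0" using rho_nn[of p q] by simp
    then obtain \<delta> where "\<delta> > 0" and d: "\<forall>x y u v.
        \<rho> p q \<le> (dist x u + dist y v) / 2 \<and> (dist x u + dist y v) / 2 < \<rho> p q + \<delta>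
        \<longrightarrow> \<alpha> (x, y) (u, v) * dist (F x y) (F u v) < \<rho> p q" using contraction by blast
    show ?thesis using key[OF that _ _ d] \<open>\<delta> > 0\<close> by simp
  qed
  have small: "\<rho> (G p) (G q) < \<epsilon>" if "\<beta> p q" "\<epsilon> > 0" "\<rho> p q < \<epsilon> + \<delta>"
    "\<forall>x y u v. \<epsilon> \<le> (dist x u + dist y v) / 2 \<and> (dist x u + dist y v) / 2 < \<epsilon> + \<delta>
        \<longrightarrow> \<alpha> (x, y) (u, v) * dist (F x y) (F u v) < \<epsilon>" for p q \<epsilon> \<delta>
  proof (cases "\<epsilon> \<le> \<rho> p q")
    case True show ?thesis by (rule key[OF that(1) True that(3,4)])
  next
    case False then show ?thesis using mono[OF that(1)] by simp
  qed
  have btrans: "\<beta> (w 0) (w (N+1))" if "\<forall>i\<le>N. \<beta> (w i) (w (Suc i))" for w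
  proof -
    have 1: "\<alpha> (w 0) (w (N+1)) \<ge> 1"
      using alpha_trans[unfolded N_transitive_def, rule_format, of w] that unfolding \<beta>_def by auto
    have "\<forall>i\<le>N. \<alpha> (prod.swap (w (N+1-i))) (prod.swap (w (N+1-Suc i))) \<ge> 1"
    proof (intro allI impI)
      fix i assume "i \<le> N"
      then have "N+1-i = Suc (N-i)" "N+1-Suc i = N-i" by arith+
      then show "\<alpha> (prod.swap (w (N+1-i))) (prod.swap (w (N+1-Suc i))) \<ge> 1"
        using that[rule_format, of "N-i"] unfolding \<beta>_def by simp
    qed
    then have 2: "\<alpha> (prod.swap (w (N+1))) (prod.swap (w 0)) \<ge> 1"
      using alpha_trans[unfolded N_transitive_def, rule_format, of "\<lambda>i. prod.swap (w (N+1-i))"] by simp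
    show ?thesis using 1 2 unfolding \<beta>_def by simp
  qed
  obtain x0 y0 where x0: "\<alpha> (x0, y0) (F x0 y0, F y0 x0) \<ge> 1" "\<alpha> (F y0 x0, F x0 y0) (y0, x0) \<ge> 1"
    using B2 by blast
  define z where "z = (\<lambda>n. (G ^^ n) (x0, y0))"
  have zS: "z (Suc n) = G (z n)" for n unfolding z_def by simp
  have beta_z: "\<beta> (z n) (z (Suc n))" for n
  proof (induction n)
    case 0 then show ?case using x0 unfolding z_def \<beta>_def G_def by simp
  next
    case (Suc n) then show ?case using beta_G zS by metis
  qed
  have beta_far: "\<beta> (z n) (z (n + k*N + 1))" for n k
  proof (induction k)
    case 0 then show ?case using beta_z by simp
  next
    case (Suc k)
    define w where "w = (\<lambda>i. if i = 0 then z n else z (n + k*N + i))"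
    have "\<forall>i\<le>N. \<beta> (w i) (w (Suc i))"
    proof (intro allI impI)
      fix i assume "i \<le> N"
      show "\<beta> (w i) (w (Suc i))"
      proof (cases "i = 0")
        case True then show ?thesis using Suc unfolding w_def by simp
      next
        case False then show ?thesis using beta_z[of "n + k*N + i"] unfolding w_def by simp
      qed
    qed
    from btrans[OF this] show ?case unfolding w_def by (simp add: algebra_simps)
  qed
  define D where "D = (\<lambda>n. \<rho> (z n) (z (Suc n)))"
  have DS: "D (Suc n) \<le> D n" for n unfolding D_def using mono[OF beta_z[of n]] zS by metis
  have Ddec: "D m \<le> D n" if "n \<le> m" for n m using lift_Suc_antimono_le[of D, OF DS that] .
  have D0: "\<exists>n0. \<forall>n\<ge>n0. D n < \<eta>" if "\<eta> > 0" for \<eta>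
  proof -
    define r where "r = Inf (range D)"
    have bdd: "bdd_below (range D)" unfolding D_def by (rule bdd_belowI[of _ 0]) (auto simp: rho_nn)
    have rl: "r \<le> D n" for n unfolding r_def using bdd by (simp add: cInf_lower)
    have r0: "r \<ge> 0" unfolding r_def D_def by (rule cInf_greatest) (auto simp: rho_nn)
    have "r = 0"
    proof (rule ccontr)
      assume "r \<noteq> 0" then have "r > 0" using r0 by simp
      then obtain \<delta> where "\<delta> > 0" and d: "\<forall>x y u v.
        r \<le> (dist x u + dist y v) / 2 \<and> (dist x u + dist y v) / 2 < r + \<delta>
        \<longrightarrow> \<alpha> (x, y) (u, v) * dist (F x y) (F u v) < r" using contraction by blast
      have "Inf (range D) < r + \<delta>" using \<open>\<delta> > 0\<close> r_def by simp
      then obtain n where "D n < r + \<delta>" using cInf_lessD[of "range D"] by auto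
      then have "\<rho> (G (z n)) (G (z (Suc n))) < r" using key[OF beta_z[of n] rl[of n, unfolded D_def] _ d] unfolding D_def by simp
      then have "D (Suc n) < r" unfolding D_def by (simp only: zS)
      then show False using rl[of "Suc n"] by simp
    qed
    then have "Inf (range D) < \<eta>" using that r_def by simp
    then obtain n where "D n < \<eta>" using cInf_lessD[of "range D"] by auto
    then show ?thesis using Ddec by (meson order.strict_trans1)
  qed
  have steps: "\<rho> (z n) (z (n + r)) \<le> r * \<eta>" if "\<forall>m\<ge>n0. D m < \<eta>" "n \<ge> n0" for n n0 r \<eta>
  proof (induction r)
    case 0 then show ?case by (simp add: \<rho>_def)
  next
    case (Suc r)
    have "\<rho> (z n) (z (n + Suc r)) \<le> \<rho> (z n) (z (n + r)) + D (n + r)"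
      using rho_tri[of "z n" "z (n + Suc r)" "z (n+r)"] unfolding D_def by simp
    also have "\<dots> \<le> r * \<eta> + \<eta>" using Suc that(1)[rule_format, of "n+r"] that(2) by simp
    finally show ?case by (simp add: algebra_simps)
  qed
  have cauchy: "\<exists>M. \<forall>n\<ge>M. \<forall>m\<ge>n. \<rho> (z n) (z m) < e" if "e > 0" for e
  proof -
    define \<epsilon> where "\<epsilon> = e / 2"
    have "\<epsilon> > 0" using that \<epsilon>_def by simp
    then obtain \<delta> where "\<delta> > 0" and d: "\<forall>x y u v.
        \<epsilon> \<le> (dist x u + dist y v) / 2 \<and> (dist x u + dist y v) / 2 < \<epsilon> + \<delta>
        \<longrightarrow> \<alpha> (x, y) (u, v) * dist (F x y) (F u v) < \<epsilon>" using contraction by blast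
    define \<eta> where "\<eta> = min \<delta> \<epsilon>"
    have "\<eta> > 0" using \<open>\<delta> > 0\<close> \<open>\<epsilon> > 0\<close> \<eta>_def by simp
    have Npos: "real N > 0" using N_pos by simp
    obtain n0 where n0: "\<forall>n\<ge>n0. D n < \<eta> / (2*N)" using D0[of "\<eta> / (2*N)"] \<open>\<eta> > 0\<close> Npos by auto
    have st: "\<rho> (z n) (z (n + r)) \<le> r * (\<eta> / (2*N))" if "n \<ge> n0" for n r
      using steps[OF n0 that] .
    have N1: "real N \<ge> 1" using N_pos by (cases N) auto
    have eta_le: "\<eta> / (2*N) \<le> \<eta> / 2" using N1 \<open>\<eta> > 0\<close>
      by (intro divide_left_mono) auto
    have eta_pos: "\<eta> / (2*N) \<ge> 0" using Npos \<open>\<eta> > 0\<close> by simp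
    have eta_sum: "\<eta> / (2*N) + real (N - 1) * (\<eta> / (2*N)) = \<eta>/2"
    proof -
      have "real (N-1) = real N - 1" using N_pos by (cases N) auto
      moreover have "\<eta> / (2*N) + (real N - 1) * (\<eta> / (2*N)) = real N * (\<eta> / (2*N))"
        using left_diff_distrib[of "real N" 1 "\<eta> / (2*N)"] by simp
      ultimately have "\<eta> / (2*N) + real (N - 1) * (\<eta> / (2*N)) = real N * (\<eta> / (2*N))"
        by simp
      also have "\<dots> = \<eta>/2" using Npos by simp
      finally show ?thesis .
    qed
    have B: "\<forall>n\<ge>n0. \<rho> (z n) (z (n + k*N + 1)) < \<epsilon> + \<eta>/2" for k
    proof (induction k)
      case 0
      show ?case
      proof (intro allI impI)
        fix n assume "n \<ge> n0"
        then have "\<rho> (z n) (z (Suc n)) < \<eta> / (2*N)" using n0 unfolding D_def by simp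
        then show "\<rho> (z n) (z (n + 0*N + 1)) < \<epsilon> + \<eta>/2" using eta_le \<open>\<epsilon> > 0\<close> by simp
      qed
    next
      case (Suc k)
      show ?case
      proof (intro allI impI)
        fix n assume "n \<ge> n0"
        have "\<rho> (z n) (z (n + k*N + 1)) < \<epsilon> + \<eta>/2" using Suc \<open>n \<ge> n0\<close> by blast
        moreover have "\<eta> \<le> \<delta>" using \<eta>_def by simp
        ultimately have "\<rho> (z n) (z (n + k*N + 1)) < \<epsilon> + \<delta>" using \<open>\<eta> > 0\<close> by argo
        then have c: "\<rho> (z (Suc n)) (z (n + k*N + 2)) < \<epsilon>"
          using small[OF beta_far[of n k] \<open>\<epsilon> > 0\<close> _ d] zS[of n] zS[of "n + k*N + 1"] by simp
        have eqN: "n + Suc k * N + 1 = n + k*N + 2 + (N - 1)" using N_pos by (cases N) auto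
        have t1: "\<rho> (z n) (z (n + Suc k * N + 1)) \<le> \<rho> (z n) (z (Suc n)) + \<rho> (z (Suc n)) (z (n + Suc k * N + 1))"
          using rho_tri by blast
        have t2: "\<rho> (z (Suc n)) (z (n + Suc k * N + 1)) \<le> \<rho> (z (Suc n)) (z (n + k*N + 2))
             + \<rho> (z (n + k*N + 2)) (z (n + k*N + 2 + (N - 1)))"
          unfolding eqN by (rule rho_tri)
        have "\<rho> (z n) (z (n + Suc k * N + 1)) \<le> D n + \<rho> (z (Suc n)) (z (n + k*N + 2))
             + \<rho> (z (n + k*N + 2)) (z (n + k*N + 2 + (N - 1)))" using t1 t2 unfolding D_def by linarith
        moreover have "D n < \<eta> / (2*N)" using n0 \<open>n \<ge> n0\<close> by simp
        moreover have "\<rho> (z (n + k*N + 2)) (z (n + k*N + 2 + (N - 1))) \<le> real (N - 1) * (\<eta> / (2*N))"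
          using st[of "n + k*N + 2" "N - 1"] \<open>n \<ge> n0\<close> by simp
        moreover note eta_sum
        ultimately show "\<rho> (z n) (z (n + Suc k * N + 1)) < \<epsilon> + \<eta>/2" using c by argo
      qed
    qed
    have "\<forall>n\<ge>n0. \<forall>m\<ge>n. \<rho> (z n) (z m) < e"
    proof (intro allI impI)
      fix n m assume "n \<ge> n0" "m \<ge> n"
      show "\<rho> (z n) (z m) < e"
      proof (cases "m = n")
        case True then show ?thesis using that by (simp add: \<rho>_def)
      next
        case False
        define j where "j = m - n - 1"
        have m1: "m = n + j + 1" using False \<open>m \<ge> n\<close> unfolding j_def by simp
        have "j div N * N + j mod N = j" by (rule div_mult_mod_eq)
        then have m: "m = n + (j div N) * N + 1 + j mod N" using m1 by linarith
        have "\<rho> (z n) (z m) \<le> \<rho> (z n) (z (n + (j div N) * N + 1)) + \<rho> (z (n + (j div N) * N + 1)) (z m)"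
          using rho_tri by blast
        moreover have "\<rho> (z (n + (j div N) * N + 1)) (z m) \<le> real (j mod N) * (\<eta> / (2*N))"
          using st[of "n + (j div N) * N + 1" "j mod N"] \<open>n \<ge> n0\<close> m by simp
        moreover have "real (j mod N) * (\<eta> / (2*N)) \<le> (real N - 1) * (\<eta> / (2*N))"
        proof -
          have "j mod N < N" using N_pos by simp
          then have "Suc (j mod N) \<le> N" by simp
          then have "real (Suc (j mod N)) \<le> real N" by (simp only: of_nat_le_iff)
          then have "real (j mod N) \<le> real N - 1" by simp
          then show ?thesis using \<open>\<eta> > 0\<close> Npos by (intro mult_right_mono) auto
        qed
        moreover have "(real N - 1) * (\<eta> / (2*N)) \<le> \<eta>/2"
        proof -
          have "(real N - 1) * (\<eta> / (2*N)) = real N * (\<eta> / (2*N)) - \<eta> / (2*N)" using left_diff_distrib[of "real N" 1 "\<eta> / (2*N)"] by simp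
          also have "real N * (\<eta> / (2*N)) = \<eta>/2" using Npos by simp
          finally show ?thesis using eta_pos by argo
        qed
        moreover have "\<rho> (z n) (z (n + (j div N) * N + 1)) < \<epsilon> + \<eta>/2" using B \<open>n \<ge> n0\<close> by blast
        moreover have "\<eta> \<le> \<epsilon>" using \<eta>_def by simp
        ultimately show ?thesis unfolding \<epsilon>_def by argo
      qed
    qed
    then show ?thesis by blast
  qed
  define xs where "xs = (\<lambda>n. fst (z n))"
  define ys where "ys = (\<lambda>n. snd (z n))"
  have distx: "dist (xs n) (xs m) \<le> 2 * \<rho> (z n) (z m)" "dist (ys n) (ys m) \<le> 2 * \<rho> (z n) (z m)" for n m
    unfolding xs_def ys_def \<rho>_def by auto
  have rho_sym: "\<rho> p q = \<rho> q p" for p q unfolding \<rho>_def by (simp add: dist_commute)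
  have cau2: "\<exists>M. \<forall>m\<ge>M. \<forall>n\<ge>M. \<rho> (z m) (z n) < e" if e_pos: "e > 0" for e
  proof -
    obtain M where M: "\<forall>n\<ge>M. \<forall>m\<ge>n. \<rho> (z n) (z m) < e" using cauchy[OF e_pos] by blast
    have "\<rho> (z m) (z n) < e" if "m \<ge> M" "n \<ge> M" for m n
      proof (cases "m \<le> n")
      case True then show ?thesis using M that by blast
    next
      case False
      then have "\<rho> (z n) (z m) < e" using M that by auto
      then show ?thesis using rho_sym[of "z m" "z n"] by argo
    qed
    then show ?thesis by blast
  qed
  have "Cauchy xs" "Cauchy ys"
  proof -
    show "Cauchy xs"
    proof (rule metric_CauchyI)
      fix e :: real assume "e > 0"
      then obtain M where "\<forall>m\<ge>M. \<forall>n\<ge>M. \<rho> (z m) (z n) < e/2" using cau2[of "e/2"] by auto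
      then have "\<forall>m\<ge>M. \<forall>n\<ge>M. dist (xs m) (xs n) < e"
      proof (intro allI impI)
        fix m n assume "m \<ge> M" "n \<ge> M"
        then have "\<rho> (z m) (z n) < e/2" using \<open>\<forall>m\<ge>M. \<forall>n\<ge>M. \<rho> (z m) (z n) < e/2\<close> by blast
        then show "dist (xs m) (xs n) < e" using distx(1)[of m n] by argo
      qed
      then show "\<exists>M. \<forall>m\<ge>M. \<forall>n\<ge>M. dist (xs m) (xs n) < e" by blast
    qed
    show "Cauchy ys"
    proof (rule metric_CauchyI)
      fix e :: real assume "e > 0"
      then obtain M where "\<forall>m\<ge>M. \<forall>n\<ge>M. \<rho> (z m) (z n) < e/2" using cau2[of "e/2"] by auto
      then have "\<forall>m\<ge>M. \<forall>n\<ge>M. dist (ys m) (ys n) < e"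
      proof (intro allI impI)
        fix m n assume "m \<ge> M" "n \<ge> M"
        then have "\<rho> (z m) (z n) < e/2" using \<open>\<forall>m\<ge>M. \<forall>n\<ge>M. \<rho> (z m) (z n) < e/2\<close> by blast
        then show "dist (ys m) (ys n) < e" using distx(2)[of m n] by argo
      qed
      then show "\<exists>M. \<forall>m\<ge>M. \<forall>n\<ge>M. dist (ys m) (ys n) < e" by blast
    qed
  qed
  then obtain a b where a: "xs \<longlonglongrightarrow> a" and b: "ys \<longlonglongrightarrow> b"
    using Cauchy_convergent_iff convergent_def by metis
  have cont: "isCont (\<lambda>p. F (fst p) (snd p)) p" for p
    using B3 continuous_on_eq_continuous_at[of UNIV] by auto
  have pr: "(\<lambda>n. (xs n, ys n)) \<longlonglongrightarrow> (a, b)" using a b by (rule tendsto_Pair)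
  have l1: "(\<lambda>n. F (xs n) (ys n)) \<longlonglongrightarrow> F a b"
    using isCont_tendsto_compose[OF cont pr] by simp
  have l2: "(\<lambda>n. F (ys n) (xs n)) \<longlonglongrightarrow> F b a"
    using isCont_tendsto_compose[OF cont tendsto_Pair[OF b a]] by simp
  have "(\<lambda>n. F (xs n) (ys n)) = (\<lambda>n. xs (Suc n))" "(\<lambda>n. F (ys n) (xs n)) = (\<lambda>n. ys (Suc n))"
    unfolding xs_def ys_def by (auto simp: zS G_def)
  then have "(\<lambda>n. xs (Suc n)) \<longlonglongrightarrow> F a b" "(\<lambda>n. ys (Suc n)) \<longlonglongrightarrow> F b a" using l1 l2 by simp_all
  then have "a = F a b" "b = F b a" using LIMSEQ_Suc[OF a] LIMSEQ_Suc[OF b] LIMSEQ_unique by blast+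
  then show ?thesis by blast
qed

end
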